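(* Let $K:\ell^2\to\mathcal{H}$ be a bounded linear operator into a real Hilbert space $\mathcal{H}$, $f\in\mathcal{H}$, $w=(w_k)$ with $w_k\ge w_0>0$, and $\gamma>0$. The mapping $\mathcal{F}:\ell^2\to\ell^2$, $\mathcal{F}(u)=u-\mathcal{S}_{\gamma w}(u-\gamma K^*(Ku-f))$, is Newton differentiable. With $\mathcal{A}=\mathcal{A}(u)=\{k: |u-\gamma K^*(Ku-f)|_k>\gamma w_k\}$, $\mathcal{I}=\mathcal{I}(u)=\mathbb{N}\setminus\mathcal{A}$, and $K^*K$ split into blocks $\mathcal{M}_{\mathcal{A}\mathcal{A}},\mathcal{M}_{\mathcal{A}\mathcal{I}},\mathcal{M}_{\mathcal{I}\mathcal{A}},\mathcal{M}_{\mathcal{I}\mathcal{I}}$ according to these index sets, a generalized derivative is given by $$\mathcal{G}(u)=\begin{pmatrix}\gamma\mathcal{M}_{\mathcal{A}\mathcal{A}} & \gamma\mathcal{M}_{\mathcal{A}\mathcal{I}}\\ 0 & I_{\mathcal{I}}\end{pmatrix},$$ i.e. $\mathcal{G}(u)=(I-P_{\mathcal{A}})+\gamma P_{\mathcal{A}}K^*K$, where $P_{\mathcal{A}}$ is the coordinate projection onto the indices in $\mathcal{A}$.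
   Context: $K^*$ is the Hilbert space adjoint of $K$; $|x|_k$ means $|x_k|$. For a positive sequence $v$, $\mathcal{S}_v(u)_k=\max\{0,|u_k|-v_k\}\,\mathrm{sgn}(u_k)$, and $\gamma w=(\gamma w_k)$. A mapping $\mathcal{F}:X\to Y$ between Banach spaces is Newton differentiable at $x$ with generalized derivative $\mathcal{G}:X\to L(X,Y)$ if $\lim_{h\to0}\|\mathcal{F}(x+h)-\mathcal{F}(x)-\mathcal{G}(x+h)h\|_Y/\|h\|_X=0$; it is Newton differentiable if this holds at every point. For index sets $\mathcal{B},\mathcal{C}\subset\mathbb{N}$, $\mathcal{M}_{\mathcal{B}\mathcal{C}}=P_{\mathcal{B}}K^*K|_{\ell^2(\mathcal{C})}$, viewed as an operator from sequences supported on $\mathcal{C}$ to sequences supported on $\mathcal{B}$. *)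

theory Defs
  imports "HOL-Analysis.Analysis"
begin

definition l2 :: "(nat \<Rightarrow> real) set" where
  "l2 = {x. summable (\<lambda>k. (x k)\<^sup>2)}"

definition l2norm :: "(nat \<Rightarrow> real) \<Rightarrow> real" where
  "l2norm x = sqrt (\<Sum>k. (x k)\<^sup>2)"

definition bounded_linear_from_l2 :: "((nat \<Rightarrow> real) \<Rightarrow> 'h::real_normed_vector) \<Rightarrow> bool" where
  "bounded_linear_from_l2 T \<longleftrightarrow>
     (\<forall>x\<in>l2. \<forall>y\<in>l2. T (\<lambda>k. x k + y k) = T x + T y) \<and>
     (\<forall>c. \<forall>x\<in>l2. T (\<lambda>k. c * x k) = c *\<^sub>R T x) \<and>
     (\<exists>C. \<forall>x\<in>l2. norm (T x) \<le> C * l2norm x)"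

definition bounded_linear_l2 :: "((nat \<Rightarrow> real) \<Rightarrow> (nat \<Rightarrow> real)) \<Rightarrow> bool" where
  "bounded_linear_l2 T \<longleftrightarrow>
     (\<forall>x\<in>l2. T x \<in> l2) \<and>
     (\<forall>x\<in>l2. \<forall>y\<in>l2. T (\<lambda>k. x k + y k) = (\<lambda>k. T x k + T y k)) \<and>
     (\<forall>c. \<forall>x\<in>l2. T (\<lambda>k. c * x k) = (\<lambda>k. c * T x k)) \<and>
     (\<exists>C. \<forall>x\<in>l2. l2norm (T x) \<le> C * l2norm x)"

definition is_adjoint_l2 ::
  "((nat \<Rightarrow> real) \<Rightarrow> 'h::real_inner) \<Rightarrow> ('h \<Rightarrow> (nat \<Rightarrow> real)) \<Rightarrow> bool" where
  "is_adjoint_l2 K Kstar \<longleftrightarrow>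
     (\<forall>y. Kstar y \<in> l2) \<and>
     (\<forall>x\<in>l2. \<forall>y. inner (K x) y = (\<Sum>k. x k * Kstar y k))"

definition newton_differentiable_l2 ::
  "((nat \<Rightarrow> real) \<Rightarrow> (nat \<Rightarrow> real)) \<Rightarrow> ((nat \<Rightarrow> real) \<Rightarrow> (nat \<Rightarrow> real) \<Rightarrow> (nat \<Rightarrow> real)) \<Rightarrow> bool" where
  "newton_differentiable_l2 F G \<longleftrightarrow>
     (\<forall>u\<in>l2. F u \<in> l2) \<and>
     (\<forall>v\<in>l2. bounded_linear_l2 (G v)) \<and>
     (\<forall>u\<in>l2. \<forall>\<epsilon>>0. \<exists>\<delta>>0. \<forall>h\<in>l2. 0 < l2norm h \<and> l2norm h < \<delta> \<longrightarrow>
        l2norm (\<lambda>k. F (\<lambda>j. u j + h j) k - F u k - G (\<lambda>j. u j + h j) h k) \<le> \<epsilon> * l2norm h)"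

definition soft_thresh :: "(nat \<Rightarrow> real) \<Rightarrow> (nat \<Rightarrow> real) \<Rightarrow> (nat \<Rightarrow> real)" where
  "soft_thresh v u = (\<lambda>k. max 0 (\<bar>u k\<bar> - v k) * sgn (u k))"

definition grad_step ::
  "((nat \<Rightarrow> real) \<Rightarrow> 'h::real_inner) \<Rightarrow> ('h \<Rightarrow> (nat \<Rightarrow> real)) \<Rightarrow> 'h \<Rightarrow> real \<Rightarrow> (nat \<Rightarrow> real) \<Rightarrow> (nat \<Rightarrow> real)" where
  "grad_step K Kstar f \<gamma> u = (\<lambda>k. u k - \<gamma> * Kstar (K u - f) k)"

definition ssn_F ::
  "((nat \<Rightarrow> real) \<Rightarrow> 'h::real_inner) \<Rightarrow> ('h \<Rightarrow> (nat \<Rightarrow> real)) \<Rightarrow> 'h \<Rightarrow> (nat \<Rightarrow> real) \<Rightarrow> real \<Rightarrow> (nat \<Rightarrow> real) \<Rightarrow> (nat \<Rightarrow> real)" where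
  "ssn_F K Kstar f w \<gamma> u = (\<lambda>k. u k - soft_thresh (\<lambda>j. \<gamma> * w j) (grad_step K Kstar f \<gamma> u) k)"

definition active_set ::
  "((nat \<Rightarrow> real) \<Rightarrow> 'h::real_inner) \<Rightarrow> ('h \<Rightarrow> (nat \<Rightarrow> real)) \<Rightarrow> 'h \<Rightarrow> (nat \<Rightarrow> real) \<Rightarrow> real \<Rightarrow> (nat \<Rightarrow> real) \<Rightarrow> nat set" where
  "active_set K Kstar f w \<gamma> u = {k. \<bar>grad_step K Kstar f \<gamma> u k\<bar> > \<gamma> * w k}"

definition ssn_G ::
  "((nat \<Rightarrow> real) \<Rightarrow> 'h::real_inner) \<Rightarrow> ('h \<Rightarrow> (nat \<Rightarrow> real)) \<Rightarrow> 'h \<Rightarrow> (nat \<Rightarrow> real) \<Rightarrow> real \<Rightarrow> (nat \<Rightarrow> real) \<Rightarrow> (nat \<Rightarrow> real) \<Rightarrow> (nat \<Rightarrow> real)" where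
  "ssn_G K Kstar f w \<gamma> u h =
     (\<lambda>k. if k \<in> active_set K Kstar f w \<gamma> u then \<gamma> * Kstar (K h) k else h k)"

end

theory Submission
  imports Defs
begin
lemma sq_le: fixes p q :: real shows "(p + q)\<^sup>2 \<le> 2*p\<^sup>2 + 2*q\<^sup>2"
proof -
  have "0 \<le> (p - q)\<^sup>2" by simp
  thus ?thesis by (simp add: power2_eq_square algebra_simps)
qed

lemma l2_bound:
  assumes "b \<in> l2" "c \<in> l2" "\<And>k. \<bar>a k\<bar> \<le> \<bar>b k\<bar> + \<bar>c k\<bar>"
  shows "a \<in> l2"
proof -
  have "\<And>k. norm ((a k)\<^sup>2) \<le> 2 * (b k)\<^sup>2 + 2 * (c k)\<^sup>2"
  proof -
    fix k
    have "(a k)\<^sup>2 \<le> (\<bar>b k\<bar> + \<bar>c k\<bar>)\<^sup>2" using assms(3)[of k]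
      by (metis power2_abs power_mono abs_ge_zero)
    also have "\<dots> \<le> 2 * (b k)\<^sup>2 + 2 * (c k)\<^sup>2"
      using sq_le[of "\<bar>b k\<bar>" "\<bar>c k\<bar>"] by simp
    finally show "norm ((a k)\<^sup>2) \<le> 2 * (b k)\<^sup>2 + 2 * (c k)\<^sup>2" by simp
  qed
  moreover have "summable (\<lambda>k. 2 * (b k)\<^sup>2 + 2 * (c k)\<^sup>2)"
    using assms(1,2) by (intro summable_add summable_mult) (auto simp: l2_def)
  ultimately show ?thesis unfolding l2_def by (auto intro: summable_comparison_test')
qed

lemma l2_norm_bound:
  assumes "b \<in> l2" "c \<in> l2" "\<And>k. \<bar>a k\<bar> \<le> \<bar>b k\<bar> + \<bar>c k\<bar>"
  shows "l2norm a \<le> sqrt 2 * (l2norm b + l2norm c)"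
proof -
  have a: "a \<in> l2" using l2_bound[OF assms] .
  have le: "\<And>k. (a k)\<^sup>2 \<le> 2 * (b k)\<^sup>2 + 2 * (c k)\<^sup>2"
  proof -
    fix k
    have "(a k)\<^sup>2 \<le> (\<bar>b k\<bar> + \<bar>c k\<bar>)\<^sup>2" using assms(3)[of k]
      by (metis power2_abs power_mono abs_ge_zero)
    also have "\<dots> \<le> 2 * (b k)\<^sup>2 + 2 * (c k)\<^sup>2"
      using sq_le[of "\<bar>b k\<bar>" "\<bar>c k\<bar>"] by simp
    finally show "(a k)\<^sup>2 \<le> 2 * (b k)\<^sup>2 + 2 * (c k)\<^sup>2" .
  qed
  have sb: "summable (\<lambda>k. (b k)\<^sup>2)" and sc: "summable (\<lambda>k. (c k)\<^sup>2)" using assms by (auto simp: l2_def)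
  have "(\<Sum>k. (a k)\<^sup>2) \<le> (\<Sum>k. 2 * (b k)\<^sup>2 + 2 * (c k)\<^sup>2)"
    using a le sb sc by (intro suminf_le) (auto simp: l2_def intro!: summable_add summable_mult)
  also have "\<dots> = 2 * (\<Sum>k. (b k)\<^sup>2) + 2 * (\<Sum>k. (c k)\<^sup>2)"
    using sb sc by (simp add: suminf_add[symmetric] suminf_mult summable_mult)
  finally have 1: "(\<Sum>k. (a k)\<^sup>2) \<le> 2 * (\<Sum>k. (b k)\<^sup>2) + 2 * (\<Sum>k. (c k)\<^sup>2)" .
  have nb: "0 \<le> (\<Sum>k. (b k)\<^sup>2)" and nc: "0 \<le> (\<Sum>k. (c k)\<^sup>2)"
    using sb sc by (auto intro: suminf_nonneg)
  have "l2norm a \<le> sqrt (2 * (\<Sum>k. (b k)\<^sup>2) + 2 * (\<Sum>k. (c k)\<^sup>2))"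
    unfolding l2norm_def using 1 by simp
  also have "\<dots> \<le> sqrt 2 * (l2norm b + l2norm c)"
  proof -
    let ?B = "(\<Sum>k. (b k)\<^sup>2)" and ?C = "(\<Sum>k. (c k)\<^sup>2)"
    have "?B + ?C \<le> (sqrt ?B + sqrt ?C)\<^sup>2" using nb nc
      by (simp add: power2_sum)
    hence "2 * ?B + 2 * ?C \<le> (sqrt 2 * (sqrt ?B + sqrt ?C))\<^sup>2"
      by (simp add: power_mult_distrib)
    hence "sqrt (2 * ?B + 2 * ?C) \<le> sqrt ((sqrt 2 * (sqrt ?B + sqrt ?C))\<^sup>2)"
      using real_sqrt_le_mono by blast
    thus ?thesis unfolding l2norm_def using nb nc by simp
  qed
  finally show ?thesis .
qed

lemma l2_scale: "x \<in> l2 \<Longrightarrow> (\<lambda>k. c * x k) \<in> l2"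
  unfolding l2_def by (simp add: power_mult_distrib summable_mult)

lemma l2norm_scale: "x \<in> l2 \<Longrightarrow> l2norm (\<lambda>k. c * x k) = \<bar>c\<bar> * l2norm x"
  unfolding l2norm_def l2_def by (simp add: power_mult_distrib suminf_mult real_sqrt_mult)

lemma l2norm_nonneg: "x \<in> l2 \<Longrightarrow> 0 \<le> l2norm x"
  unfolding l2norm_def l2_def by (auto intro: suminf_nonneg)

lemma l2_coord: assumes "x \<in> l2" shows "\<bar>x k\<bar> \<le> l2norm x"
proof -
  have s: "summable (\<lambda>k. (x k)\<^sup>2)" using assms by (simp add: l2_def)
  have "(\<Sum>j\<in>{k}. (x j)\<^sup>2) \<le> (\<Sum>j. (x j)\<^sup>2)"
    by (rule sum_le_suminf[OF s]) auto
  hence "(x k)\<^sup>2 \<le> (\<Sum>j. (x j)\<^sup>2)" by simp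
  hence "sqrt ((x k)\<^sup>2) \<le> sqrt (\<Sum>j. (x j)\<^sup>2)" using real_sqrt_le_mono by blast
  thus ?thesis by (simp add: l2norm_def)
qed

lemma l2_zero: "(\<lambda>k. 0::real) \<in> l2" "l2norm (\<lambda>k. 0) = 0"
  by (auto simp: l2_def l2norm_def)

lemma l2_finite: "(\<lambda>k. if k < n then x k else 0) \<in> l2"
  unfolding l2_def mem_Collect_eq
  by (rule summable_finite[of "{..<n}"]) auto

definition ev :: "nat \<Rightarrow> nat \<Rightarrow> real" where "ev j = (\<lambda>k. if k = j then 1 else 0)"

lemma ev_l2: "ev j \<in> l2" "l2norm (ev j) = 1"
proof -
  have "summable (\<lambda>k. (ev j k)\<^sup>2)" unfolding ev_def
    by (rule summable_finite[of "{j}"]) auto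
  thus "ev j \<in> l2" by (simp add: l2_def)
  have "(\<Sum>k. (ev j k)\<^sup>2) = (\<Sum>k\<in>{j}. (ev j k)\<^sup>2)"
    by (rule suminf_finite) (auto simp: ev_def)
  thus "l2norm (ev j) = 1" by (simp add: l2norm_def ev_def)
qed

lemma adj_coord:
  assumes "is_adjoint_l2 K Kstar"
  shows "Kstar y j = inner (K (ev j)) y"
proof -
  have "inner (K (ev j)) y = (\<Sum>k. ev j k * Kstar y k)" using assms ev_l2 by (simp add: is_adjoint_l2_def)
  also have "\<dots> = (\<Sum>k\<in>{j}. ev j k * Kstar y k)"
    by (rule suminf_finite) (auto simp: ev_def)
  finally show ?thesis by (simp add: ev_def)
qed

lemma Kstar_bound:
  assumes adj: "is_adjoint_l2 K Kstar" and C: "\<And>x. x \<in> l2 \<Longrightarrow> norm (K x) \<le> C * l2norm x"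
    and C0: "C \<ge> 0"
  shows "l2norm (Kstar y) \<le> C * norm y"
proof -
  define v where "v = Kstar y"
  have vl2: "v \<in> l2" using adj by (simp add: is_adjoint_l2_def v_def)
  have "\<And>n. (\<Sum>k<n. (v k)\<^sup>2) \<le> (C * norm y)\<^sup>2"
  proof -
    fix n
    define x where "x = (\<lambda>k. if k < n then v k else 0)"
    define S where "S = (\<Sum>k<n. (v k)\<^sup>2)"
    have xl2: "x \<in> l2" unfolding x_def by (rule l2_finite)
    have S0: "S \<ge> 0" unfolding S_def by (simp add: sum_nonneg)
    have "(\<Sum>k. x k * v k) = (\<Sum>k<n. x k * v k)"
      by (rule suminf_finite) (auto simp: x_def)
    hence e1: "(\<Sum>k. x k * v k) = S" by (simp add: x_def S_def power2_eq_square)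
    have "(\<Sum>k. (x k)\<^sup>2) = (\<Sum>k<n. (x k)\<^sup>2)"
      by (rule suminf_finite) (auto simp: x_def)
    hence e2: "l2norm x = sqrt S" by (simp add: l2norm_def x_def S_def)
    have "S = inner (K x) y" using adj xl2 e1 by (simp add: is_adjoint_l2_def v_def)
    also have "\<dots> \<le> norm (K x) * norm y" by (rule norm_cauchy_schwarz)
    also have "\<dots> \<le> C * sqrt S * norm y" using C[OF xl2] e2 by (simp add: mult_right_mono)
    finally have le0: "S \<le> C * sqrt S * norm y" .
    have e: "sqrt S * sqrt S = S" using S0 by simp
    have le: "sqrt S * sqrt S \<le> sqrt S * (C * norm y)" unfolding e using le0 by (simp add: ac_simps)
    have "sqrt S \<le> C * norm y"
    proof (cases "S = 0")
      case True thus ?thesis using C0 by simp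
    next
      case False hence "sqrt S > 0" using S0 by simp
      thus ?thesis using le mult_le_cancel_left_pos by blast
    qed
    hence "(sqrt S)\<^sup>2 \<le> (C * norm y)\<^sup>2" by (rule power_mono) (simp add: S0)
    thus "(\<Sum>k<n. (v k)\<^sup>2) \<le> (C * norm y)\<^sup>2" using S0 by (simp add: S_def)
  qed
  hence "(\<Sum>k. (v k)\<^sup>2) \<le> (C * norm y)\<^sup>2"
    using vl2 by (intro suminf_le_const) (auto simp: l2_def)
  hence "sqrt (\<Sum>k. (v k)\<^sup>2) \<le> sqrt ((C * norm y)\<^sup>2)" using real_sqrt_le_mono by blast
  thus ?thesis using C0 by (simp add: l2norm_def v_def)
qed

lemma scalar_zero:
  fixes z d t :: real
  assumes t: "t > 0" and hd: "\<bar>d\<bar> < (if \<bar>z\<bar> = t then t else \<bar>\<bar>z\<bar> - t\<bar>)"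
  shows "(if t < \<bar>z + d\<bar> then d else 0) - (max 0 (\<bar>z+d\<bar> - t) * sgn (z+d) - max 0 (\<bar>z\<bar> - t) * sgn z) = 0"
  using t hd by (auto simp: sgn_if abs_if split: if_splits)

lemma soft_le: fixes x t :: real shows "t \<ge> 0 \<Longrightarrow> \<bar>max 0 (\<bar>x\<bar> - t) * sgn x\<bar> \<le> \<bar>x\<bar>"
  by (auto simp: sgn_if abs_if)

theorem proposition3p7:
  fixes K :: "(nat \<Rightarrow> real) \<Rightarrow> 'h::{real_inner, complete_space}"
    and Kstar :: "'h \<Rightarrow> (nat \<Rightarrow> real)"
    and f :: 'h and w :: "nat \<Rightarrow> real" and w0 \<gamma> :: real
  assumes "bounded_linear_from_l2 K"
    and "is_adjoint_l2 K Kstar"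
    and "w0 > 0" and "\<And>k. w k \<ge> w0"
    and "\<gamma> > 0"
  shows "newton_differentiable_l2 (ssn_F K Kstar f w \<gamma>) (ssn_G K Kstar f w \<gamma>)"
proof -
  note bl = assms(1) and adj = assms(2) and w0 = assms(3) and ww = assms(4) and g0 = assms(5)
  obtain C where C: "\<And>x. x \<in> l2 \<Longrightarrow> norm (K x) \<le> C * l2norm x"
    using bl unfolding bounded_linear_from_l2_def by blast
  define C0 where "C0 = max C 0"
  have C0p: "C0 \<ge> 0" by (simp add: C0_def)
  have Kb: "norm (K x) \<le> C0 * l2norm x" if "x \<in> l2" for x
  proof -
    have "C * l2norm x \<le> C0 * l2norm x" using l2norm_nonneg[OF that]
      by (simp add: C0_def mult_right_mono)
    thus ?thesis using C[OF that] by linarith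
  qed
  have Kadd: "K (\<lambda>k. x k + y k) = K x + K y" if "x \<in> l2" "y \<in> l2" for x y
    using bl that unfolding bounded_linear_from_l2_def by blast
  have Kscal: "K (\<lambda>k. c * x k) = c *\<^sub>R K x" if "x \<in> l2" for x c
    using bl that unfolding bounded_linear_from_l2_def by blast
  have KS: "Kstar y j = inner (K (ev j)) y" for y j using adj_coord[OF adj] .
  have KSl2: "Kstar y \<in> l2" for y using adj by (simp add: is_adjoint_l2_def)
  have KSb: "l2norm (Kstar y) \<le> C0 * norm y" for y
    by (rule Kstar_bound[OF adj Kb C0p])
  have KKh: "\<bar>Kstar (K h) k\<bar> \<le> C0 * C0 * l2norm h" if "h \<in> l2" for h k
  proof -
    have "\<bar>Kstar (K h) k\<bar> \<le> norm (K (ev k)) * norm (K h)"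
      unfolding KS by (rule Cauchy_Schwarz_ineq2)
    also have "\<dots> \<le> (C0 * 1) * (C0 * l2norm h)"
      using Kb[OF ev_l2(1)] Kb[OF that] ev_l2(2) C0p
      by (intro mult_mono) auto
    finally show ?thesis by simp
  qed
  have gsl2: "grad_step K Kstar f \<gamma> u \<in> l2" if "u \<in> l2" for u
    unfolding grad_step_def
    by (rule l2_bound[OF that l2_scale[OF KSl2, of \<gamma> "K u - f"]]) auto
  have P1: "\<forall>u\<in>l2. ssn_F K Kstar f w \<gamma> u \<in> l2"
  proof
    fix u assume u: "u \<in> l2"
    show "ssn_F K Kstar f w \<gamma> u \<in> l2"
      unfolding ssn_F_def soft_thresh_def
    proof (rule l2_bound[OF u gsl2[OF u]])
      fix k
      have "\<gamma> * w k \<ge> 0" using ww[of k] w0 g0 by simp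
      thus "\<bar>u k - max 0 (\<bar>grad_step K Kstar f \<gamma> u k\<bar> - \<gamma> * w k) * sgn (grad_step K Kstar f \<gamma> u k)\<bar>
         \<le> \<bar>u k\<bar> + \<bar>grad_step K Kstar f \<gamma> u k\<bar>"
        using soft_le[of "\<gamma> * w k" "grad_step K Kstar f \<gamma> u k"] by linarith
    qed
  qed
  have P2: "\<forall>v\<in>l2. bounded_linear_l2 (ssn_G K Kstar f w \<gamma> v)"
  proof
    fix v assume v: "v \<in> l2"
    define A where "A = active_set K Kstar f w \<gamma> v"
    have G: "ssn_G K Kstar f w \<gamma> v = (\<lambda>h k. if k \<in> A then \<gamma> * Kstar (K h) k else h k)"
      by (simp add: ssn_G_def A_def fun_eq_iff)
    have Gb: "\<bar>(if k \<in> A then \<gamma> * Kstar (K h) k else h k)\<bar> \<le> \<bar>h k\<bar> + \<bar>\<gamma> * Kstar (K h) k\<bar>" for h k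
      by auto
    show "bounded_linear_l2 (ssn_G K Kstar f w \<gamma> v)"
      unfolding bounded_linear_l2_def G
    proof (intro conjI ballI allI)
      fix x assume x: "x \<in> l2"
      show "(\<lambda>k. if k \<in> A then \<gamma> * Kstar (K x) k else x k) \<in> l2"
        by (rule l2_bound[OF x l2_scale[OF KSl2], OF Gb])
    next
      fix x y assume x: "x \<in> l2" and y: "y \<in> l2"
      show "(\<lambda>k. if k \<in> A then \<gamma> * Kstar (K (\<lambda>k. x k + y k)) k else x k + y k) =
          (\<lambda>k. (if k \<in> A then \<gamma> * Kstar (K x) k else x k) + (if k \<in> A then \<gamma> * Kstar (K y) k else y k))"
        using Kadd[OF x y] by (simp add: KS inner_add_right algebra_simps fun_eq_iff)
    next
      fix c x assume x: "x \<in> l2"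
      show "(\<lambda>k. if k \<in> A then \<gamma> * Kstar (K (\<lambda>k. c * x k)) k else c * x k) =
          (\<lambda>k. c * (if k \<in> A then \<gamma> * Kstar (K x) k else x k))"
        using Kscal[OF x] by (simp add: KS fun_eq_iff)
    next
      show "\<exists>C. \<forall>x\<in>l2. l2norm (\<lambda>k. if k \<in> A then \<gamma> * Kstar (K x) k else x k) \<le> C * l2norm x"
      proof (intro exI ballI)
        fix x assume x: "x \<in> l2"
        have "l2norm (\<lambda>k. if k \<in> A then \<gamma> * Kstar (K x) k else x k)
            \<le> sqrt 2 * (l2norm x + l2norm (\<lambda>k. \<gamma> * Kstar (K x) k))"
          by (rule l2_norm_bound[OF x l2_scale[OF KSl2], OF Gb])
        also have "l2norm (\<lambda>k. \<gamma> * Kstar (K x) k) = \<gamma> * l2norm (Kstar (K x))"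
          using l2norm_scale[OF KSl2] g0 by simp
        also have "\<gamma> * l2norm (Kstar (K x)) \<le> \<gamma> * (C0 * (C0 * l2norm x))"
          using KSb[of "K x"] Kb[OF x] C0p g0
          by (intro mult_left_mono) (auto intro: order_trans mult_left_mono)
        finally show "l2norm (\<lambda>k. if k \<in> A then \<gamma> * Kstar (K x) k else x k)
            \<le> (sqrt 2 * (1 + \<gamma> * C0 * C0)) * l2norm x"
          by (simp add: algebra_simps)
      qed
    qed
  qed
  have P3: "\<forall>u\<in>l2. \<forall>\<epsilon>>0. \<exists>\<delta>>0. \<forall>h\<in>l2. 0 < l2norm h \<and> l2norm h < \<delta> \<longrightarrow>
        l2norm (\<lambda>k. ssn_F K Kstar f w \<gamma> (\<lambda>j. u j + h j) k - ssn_F K Kstar f w \<gamma> u k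
           - ssn_G K Kstar f w \<gamma> (\<lambda>j. u j + h j) h k) \<le> \<epsilon> * l2norm h"
  proof (intro ballI allI impI)
    fix u :: "nat \<Rightarrow> real" and \<epsilon> :: real assume u: "u \<in> l2" and eps: "\<epsilon> > 0"
    define z where "z = grad_step K Kstar f \<gamma> u"
    define t0 where "t0 = \<gamma> * w0"
    have t0: "t0 > 0" using g0 w0 by (simp add: t0_def)
    have tk: "\<gamma> * w k \<ge> t0" for k using ww[of k] g0 by (simp add: t0_def)
    have zl2: "z \<in> l2" using gsl2[OF u] by (simp add: z_def)
    have lim: "(\<lambda>k. (z k)\<^sup>2) \<longlonglongrightarrow> 0" by (rule summable_LIMSEQ_zero) (use zl2 in \<open>simp add: l2_def\<close>)
    have "eventually (\<lambda>k. (z k)\<^sup>2 < (t0/2)\<^sup>2) sequentially"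
      by (rule order_tendstoD(2)[OF lim]) (use t0 in simp)
    then obtain N where N: "\<And>k. k \<ge> N \<Longrightarrow> (z k)\<^sup>2 < (t0/2)\<^sup>2" by (auto simp: eventually_sequentially)
    define Fs where "Fs = {k. t0/2 \<le> \<bar>z k\<bar>}"
    have "Fs \<subseteq> {..<N}"
    proof
      fix k assume k: "k \<in> Fs"
      show "k \<in> {..<N}"
      proof (rule ccontr)
        assume "k \<notin> {..<N}"
        hence "\<bar>z k\<bar>\<^sup>2 < (t0/2)\<^sup>2" using N by simp
        hence "\<bar>z k\<bar> < t0/2" by (rule power2_less_imp_less) (use t0 in simp)
        thus False using k by (simp add: Fs_def)
      qed
    qed
    hence finFs: "finite Fs" by (rule finite_subset) simp
    define dl where "dl k = (if \<bar>z k\<bar> = \<gamma> * w k then \<gamma> * w k else \<bar>\<bar>z k\<bar> - \<gamma> * w k\<bar>)" for k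
    have dlpos: "dl k > 0" for k using tk[of k] t0 by (auto simp: dl_def)
    define \<delta>0 where "\<delta>0 = Min (insert (t0/2) (dl ` Fs))"
    have \<delta>0pos: "\<delta>0 > 0" unfolding \<delta>0_def using finFs t0 dlpos by (subst Min_gr_iff) auto
    have \<delta>0le: "\<delta>0 \<le> dl k" for k
    proof (cases "k \<in> Fs")
      case True thus ?thesis unfolding \<delta>0_def using finFs by (intro Min_le) auto
    next
      case False
      hence "\<bar>z k\<bar> < t0/2" by (simp add: Fs_def)
      hence "dl k \<ge> t0/2" using tk[of k] by (auto simp: dl_def)
      moreover have "\<delta>0 \<le> t0/2" unfolding \<delta>0_def using finFs by (intro Min_le) auto
      ultimately show ?thesis by linarith
    qed
    define M where "M = 1 + \<gamma> * C0 * C0"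
    have Mpos: "M > 0" unfolding M_def using g0 C0p by (simp add: add_pos_nonneg)
    show "\<exists>\<delta>>0. \<forall>h\<in>l2. 0 < l2norm h \<and> l2norm h < \<delta> \<longrightarrow>
        l2norm (\<lambda>k. ssn_F K Kstar f w \<gamma> (\<lambda>j. u j + h j) k - ssn_F K Kstar f w \<gamma> u k
           - ssn_G K Kstar f w \<gamma> (\<lambda>j. u j + h j) h k) \<le> \<epsilon> * l2norm h"
    proof (intro exI conjI ballI impI)
      show "\<delta>0 / M > 0" using \<delta>0pos Mpos by simp
      fix h assume h: "h \<in> l2" and hs: "0 < l2norm h \<and> l2norm h < \<delta>0 / M"
      define d where "d k = h k - \<gamma> * Kstar (K h) k" for k
      have dk: "\<bar>d k\<bar> < dl k" for k
      proof -
        have "\<bar>d k\<bar> \<le> \<bar>h k\<bar> + \<gamma> * \<bar>Kstar (K h) k\<bar>" using g0 abs_triangle_ineq4[of "h k" "\<gamma> * Kstar (K h) k"] by (simp add: d_def abs_mult)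
        also have "\<dots> \<le> l2norm h + \<gamma> * (C0 * C0 * l2norm h)"
          using l2_coord[OF h, of k] KKh[OF h, of k] g0 by (intro add_mono mult_left_mono) auto
        also have "\<dots> = M * l2norm h" by (simp add: M_def algebra_simps)
        also have "\<dots> < \<delta>0" using hs Mpos by (simp add: field_simps)
        finally show ?thesis using \<delta>0le[of k] by linarith
      qed
      have uh: "(\<lambda>j. u j + h j) \<in> l2" by (rule l2_bound[OF u h]) simp
      have gs: "grad_step K Kstar f \<gamma> (\<lambda>j. u j + h j) k = z k + d k" for k
        using Kadd[OF u h]
        by (simp add: z_def d_def grad_step_def KS inner_diff_right inner_add_right algebra_simps)
      have res: "ssn_F K Kstar f w \<gamma> (\<lambda>j. u j + h j) k - ssn_F K Kstar f w \<gamma> u k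
           - ssn_G K Kstar f w \<gamma> (\<lambda>j. u j + h j) h k = 0" for k
      proof -
        have "ssn_F K Kstar f w \<gamma> (\<lambda>j. u j + h j) k - ssn_F K Kstar f w \<gamma> u k
           - ssn_G K Kstar f w \<gamma> (\<lambda>j. u j + h j) h k =
          (if \<gamma> * w k < \<bar>z k + d k\<bar> then d k else 0) - (max 0 (\<bar>z k + d k\<bar> - \<gamma> * w k) * sgn (z k + d k)
            - max 0 (\<bar>z k\<bar> - \<gamma> * w k) * sgn (z k))"
          unfolding ssn_F_def ssn_G_def soft_thresh_def active_set_def
          by (simp add: gs z_def[symmetric]) (simp add: d_def)
        also have "\<dots> = 0"
          by (rule scalar_zero) (use tk[of k] t0 dk[of k] in \<open>auto simp: dl_def\<close>)
        finally show ?thesis .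
      qed
      show "l2norm (\<lambda>k. ssn_F K Kstar f w \<gamma> (\<lambda>j. u j + h j) k - ssn_F K Kstar f w \<gamma> u k
           - ssn_G K Kstar f w \<gamma> (\<lambda>j. u j + h j) h k) \<le> \<epsilon> * l2norm h"
        unfolding res using l2_zero(2) eps hs by simp
    qed
  qed
  show ?thesis unfolding newton_differentiable_l2_def using P1 P2 P3 by blast
qed

end
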